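(* Let $ABCD$ be a convex quadrilateral. Let $\alpha_1,\alpha_2,\alpha_3,\alpha_4$ be the four angles that the diagonal $AC$ makes with the sides, namely $\angle BAC,\angle BCA,\angle DAC,\angle DCA$. Let $\beta_1,\beta_2,\beta_3,\beta_4$ be the four angles that the diagonal $BD$ makes with the sides, namely $\angle ABD,\angle ADB,\angle CBD,\angle CDB$. Suppose $0<\varepsilon<\frac{\pi}{12}$ and $|\alpha_i-\frac{\pi}{4}|<\varepsilon$ for every $i$. Then $|\beta_j-\frac{\pi}{4}|<3\varepsilon$ for every $j$. *)

theory Defs
  imports "HOL-Analysis.Analysis"
begin

definition vangle :: "real^2 \<Rightarrow> real^2 \<Rightarrow> real" where
  "vangle u v = arccos ((u \<bullet> v) / (norm u * norm v))"

definition angle3 :: "real^2 \<Rightarrow> real^2 \<Rightarrow> real^2 \<Rightarrow> real" where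
  "angle3 X Y Z = vangle (X - Y) (Z - Y)"

(* Convex (non-degenerate) quadrilateral ABCD with vertices in this cyclic order:
   no three vertices collinear, and the diagonals AC and BD cross at a point
   interior to both. *)
definition convex_quadrilateral :: "real^2 \<Rightarrow> real^2 \<Rightarrow> real^2 \<Rightarrow> real^2 \<Rightarrow> bool" where
  "convex_quadrilateral A B C D \<longleftrightarrow>
     \<not> collinear {A, B, C} \<and> \<not> collinear {A, B, D} \<and>
     \<not> collinear {A, C, D} \<and> \<not> collinear {B, C, D} \<and>
     open_segment A C \<inter> open_segment B D \<noteq> {}"

end

theory Submission
  imports Defs
begin

lemma inner2: "(u::real^2) \<bullet> v = u$1 * v$1 + u$2 * v$2"
  by (simp add: inner_vec_def sum_2)

lemma sig_mult: "\<sigma>^2 = (1::real) \<Longrightarrow> (\<sigma>*a)*(\<sigma>*b) = a*b"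
  by (metis mult.assoc mult.commute mult_1 power2_eq_square)

lemma vangle_coords:
  fixes w1 w2 :: "real^2" and p q \<sigma> :: real
  assumes K: "p^2 + q^2 > 0" and s: "\<sigma>^2 = 1"
  shows "vangle w1 w2 = arccos (((w1$1*p+w1$2*q)*(w2$1*p+w2$2*q) + (\<sigma>*(p*w1$2-q*w1$1))*(\<sigma>*(p*w2$2-q*w2$1)))
     / (sqrt ((w1$1*p+w1$2*q)^2 + (\<sigma>*(p*w1$2-q*w1$1))^2) * sqrt ((w2$1*p+w2$2*q)^2 + (\<sigma>*(p*w2$2-q*w2$1))^2)))"
proof -
  let ?K = "p^2+q^2"
  have e1: "((w1$1*p+w1$2*q)*(w2$1*p+w2$2*q) + (\<sigma>*(p*w1$2-q*w1$1))*(\<sigma>*(p*w2$2-q*w2$1))) = ?K * (w1 \<bullet> w2)"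
    unfolding sig_mult[OF s] inner2 power2_eq_square by algebra
  have nu: "(w1$1*p+w1$2*q)^2 + (\<sigma>*(p*w1$2-q*w1$1))^2 = ?K * (w1 \<bullet> w1)"
    unfolding power2_eq_square sig_mult[OF s] inner2 by algebra
  have nv: "(w2$1*p+w2$2*q)^2 + (\<sigma>*(p*w2$2-q*w2$1))^2 = ?K * (w2 \<bullet> w2)"
    unfolding power2_eq_square sig_mult[OF s] inner2 by algebra
  have sq: "sqrt (?K * (w1 \<bullet> w1)) * sqrt (?K * (w2 \<bullet> w2)) = ?K * (norm w1 * norm w2)"
    using K by (simp add: real_sqrt_mult norm_eq_sqrt_inner)
  have Knz: "?K \<noteq> 0" using K by linarith
  show ?thesis unfolding vangle_def e1 nu nv sq mult_divide_mult_cancel_left[OF Knz] ..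
qed


lemma arccos_arctan:
  fixes a1 b1 a2 b2 :: real
  assumes b: "b1 * b2 > 0"
  shows "arccos ((a1*a2 + b1*b2) / (sqrt (a1^2+b1^2) * sqrt (a2^2+b2^2))) = \<bar>arctan (a1/b1) - arctan (a2/b2)\<bar>"
proof -
  define z1 where "z1 = a1/b1"
  define z2 where "z2 = a2/b2"
  have b1: "b1 \<noteq> 0" and b2: "b2 \<noteq> 0" using b by auto
  have a1: "a1 = z1*b1" and a2: "a2 = z2*b2" using b1 b2 by (auto simp: z1_def z2_def)
  have s1: "sqrt (a1^2+b1^2) = \<bar>b1\<bar> * sqrt (1+z1^2)"
  proof -
    have "a1^2+b1^2 = b1^2 * (1+z1^2)" unfolding a1 by (simp add: power_mult_distrib algebra_simps)
    then show ?thesis by (simp add: real_sqrt_mult)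
  qed
  have s2: "sqrt (a2^2+b2^2) = \<bar>b2\<bar> * sqrt (1+z2^2)"
  proof -
    have "a2^2+b2^2 = b2^2 * (1+z2^2)" unfolding a2 by (simp add: power_mult_distrib algebra_simps)
    then show ?thesis by (simp add: real_sqrt_mult)
  qed
  have ab: "\<bar>b1\<bar> * \<bar>b2\<bar> = b1*b2" using b by (simp add: abs_mult[symmetric])
  have r: "(a1*a2 + b1*b2) / (sqrt (a1^2+b1^2) * sqrt (a2^2+b2^2)) = (1 + z1*z2) / (sqrt (1+z1^2) * sqrt (1+z2^2))"
  proof -
    have "(a1*a2 + b1*b2) = (b1*b2) * (1 + z1*z2)" unfolding a1 a2 by (simp add: algebra_simps)
    moreover have "sqrt (a1^2+b1^2) * sqrt (a2^2+b2^2) = (b1*b2) * (sqrt (1+z1^2) * sqrt (1+z2^2))"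
      unfolding s1 s2 ab[symmetric] by (simp add: algebra_simps)
    ultimately show ?thesis using b1 b2 by simp
  qed
  have c: "cos (arctan z1 - arctan z2) = (1 + z1*z2) / (sqrt (1+z1^2) * sqrt (1+z2^2))"
    by (simp add: cos_diff cos_arctan sin_arctan add_divide_distrib)
  have "\<bar>arctan z1 - arctan z2\<bar> \<le> pi" using arctan_bounded[of z1] arctan_bounded[of z2] by linarith
  then have "arccos (cos \<bar>arctan z1 - arctan z2\<bar>) = \<bar>arctan z1 - arctan z2\<bar>"
    by (intro arccos_cos) auto
  then have "arccos ((1 + z1*z2) / (sqrt (1+z1^2) * sqrt (1+z2^2))) = \<bar>arctan z1 - arctan z2\<bar>"
    unfolding c[symmetric] cos_abs_real .
  then show ?thesis unfolding r by (simp add: z1_def z2_def)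
qed


lemma ang_axis:
  fixes X Y k :: real
  assumes Y: "Y \<noteq> 0" and k: "k > 0"
  shows "arccos ((X*k) / (sqrt (X^2+Y^2) * k)) = pi/2 - arctan (X/\<bar>Y\<bar>)"
proof -
  define z where "z = X/\<bar>Y\<bar>"
  have Xz: "X = z*\<bar>Y\<bar>" using Y by (simp add: z_def)
  have s: "sqrt (X^2+Y^2) = \<bar>Y\<bar> * sqrt (1+z^2)"
  proof -
    have "X^2+Y^2 = Y^2 * (1+z^2)" unfolding Xz by (simp add: power_mult_distrib algebra_simps)
    then show ?thesis by (simp add: real_sqrt_mult)
  qed
  have r: "(X*k) / (sqrt (X^2+Y^2) * k) = z / sqrt (1+z^2)"
    using Y k unfolding s by (simp add: Xz)
  have "cos (pi/2 - arctan z) = z / sqrt (1+z^2)" by (simp add: cos_diff sin_arctan)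
  moreover have "arccos (cos (pi/2 - arctan z)) = pi/2 - arctan z"
    using arctan_bounded[of z] by (intro arccos_cos) auto
  ultimately show ?thesis unfolding r z_def by simp
qed

lemma tan_ident:
  fixes e :: real
  assumes "0 < e" "e < pi/12"
  shows "tan (pi/4 + e) - tan (pi/4 - e) = 2 * tan (2*e)"
proof -
  have pi: "pi > 3" using pi_gt3 .
  have ce: "cos e > 0" using assms by (intro cos_gt_zero_pi) auto
  have c2e: "cos (2*e) > 0" using assms by (intro cos_gt_zero_pi) auto
  have cp: "cos (pi/4 + e) > 0" using assms by (intro cos_gt_zero_pi) auto
  have cm: "cos (pi/4 - e) > 0" using assms by (intro cos_gt_zero_pi) auto
  have c4: "cos (pi/4) \<noteq> 0" by (simp add: cos_45)
  define tt where "tt = tan e"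
  have s0: "0 < tt" using assms pi by (simp add: tt_def tan_gt_zero)
  have s1: "tt < 1"
  proof -
    have "tan e < tan (pi/4)" using assms pi by (intro tan_monotone) auto
    then show ?thesis by (simp add: tt_def tan_45)
  qed
  have tp: "tan (pi/4 + e) = (1+tt)/(1-tt)"
    using tan_add[of "pi/4" e] c4 ce cp by (simp add: tan_45 tt_def)
  have tm: "tan (pi/4 - e) = (1-tt)/(1+tt)"
    using tan_diff[of "pi/4" e] c4 ce cm by (simp add: tan_45 tt_def)
  have t2: "tan (2*e) = 2*tt/(1-tt^2)"
    using tan_double[of e] ce c2e by (simp add: tt_def)
  have d1: "1 - tt > 0" "1 + tt > 0" using s0 s1 by auto
  have d3: "1 - tt^2 = (1-tt)*(1+tt)" by (simp add: power2_eq_square algebra_simps)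
  have "(1+tt)/(1-tt) - (1-tt)/(1+tt) = ((1+tt)*(1+tt) - (1-tt)*(1-tt))/((1-tt)*(1+tt))"
    using d1 by (simp add: diff_frac_eq)
  also have "\<dots> = 2 * (2*tt/(1-tt^2))" unfolding d3 by (simp add: algebra_simps)
  finally show ?thesis unfolding tp tm t2 .
qed

lemma arctan_window:
  fixes c e :: real
  assumes "\<bar>arctan c - pi/4\<bar> < e" "0 < e" "e < pi/4"
  shows "tan (pi/4 - e) < c \<and> c < tan (pi/4 + e)"
proof -
  have a1: "arctan (tan (pi/4 - e)) = pi/4 - e" using assms by (intro arctan_tan) auto
  have a2: "arctan (tan (pi/4 + e)) = pi/4 + e" using assms by (intro arctan_tan) auto
  have "arctan (tan (pi/4 - e)) < arctan c" "arctan c < arctan (tan (pi/4 + e))"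
    unfolding a1 a2 using assms by auto
  then show ?thesis by (simp add: arctan_less_iff)
qed

lemma arctan_small:
  fixes g d :: real
  assumes "\<bar>g\<bar> < tan d" "0 < d" "d < pi/2"
  shows "\<bar>arctan g\<bar> < d"
proof -
  have a: "arctan (tan d) = d" using assms by (intro arctan_tan) auto
  have "arctan g < arctan (tan d)" "arctan (-g) < arctan (tan d)" using assms by (auto simp: arctan_less_iff)
  then show ?thesis unfolding a arctan_minus by linarith
qed

lemma cross0_collinear:
  fixes A C Z :: "real^2"
  assumes "(C$1-A$1)*(Z$2-A$2) - (C$2-A$2)*(Z$1-A$1) = 0"
  shows "collinear {A, Z, C}"
proof (cases "A = C")
  case True then show ?thesis by (metis collinear_2 insert_absorb2 insert_commute)
next
  case False
  define p where "p = C$1-A$1"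
  define q where "q = C$2-A$2"
  have K: "p^2+q^2 \<noteq> 0"
  proof
    assume "p^2+q^2 = 0"
    then have "p = 0" "q = 0" by simp_all
    then have "A = C" by (simp add: vec_eq_iff forall_2 p_def q_def)
    then show False using False by simp
  qed
  have cr: "p*(Z$2-A$2) = q*(Z$1-A$1)" using assms by (simp add: p_def q_def)
  define t where "t = ((Z$1-A$1)*p + (Z$2-A$2)*q)/(p^2+q^2)"
  have t1: "t*p = Z$1-A$1"
  proof -
    have "((Z$1-A$1)*p + (Z$2-A$2)*q)*p = (Z$1-A$1)*p*p + q*(p*(Z$2-A$2))" by (simp add: algebra_simps)
    also have "\<dots> = (Z$1-A$1)*(p^2+q^2)" unfolding cr by (simp add: algebra_simps power2_eq_square)
    finally have "((Z$1-A$1)*p + (Z$2-A$2)*q)*p = (Z$1-A$1)*(p^2+q^2)" .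
    then show ?thesis using K by (simp add: t_def field_simps)
  qed
  have t2: "t*q = Z$2-A$2"
  proof -
    have "((Z$1-A$1)*p + (Z$2-A$2)*q)*q = p*(q*(Z$1-A$1)) + (Z$2-A$2)*q*q" by (simp add: algebra_simps)
    also have "\<dots> = (Z$2-A$2)*(p^2+q^2)" unfolding cr[symmetric] by (simp add: algebra_simps power2_eq_square)
    finally have "((Z$1-A$1)*p + (Z$2-A$2)*q)*q = (Z$2-A$2)*(p^2+q^2)" .
    then show ?thesis using K by (simp add: t_def field_simps)
  qed
  have C1: "C$1 = A$1 + p" and C2: "C$2 = A$2 + q" by (simp_all add: p_def q_def)
  have z1: "Z$1 = (1-t) * A$1 + (1-(1-t)) * C$1" unfolding C1 using t1 by (simp add: algebra_simps)
  have z2: "Z$2 = (1-t) * A$2 + (1-(1-t)) * C$2" unfolding C2 using t2 by (simp add: algebra_simps)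
  have "Z = (1-t) *\<^sub>R A + (1-(1-t)) *\<^sub>R C"
    unfolding vec_eq_iff forall_2 using z1 z2 by simp
  then show ?thesis unfolding collinear_3_expand by blast
qed


theorem lemma3p2p2:
  fixes A B C D :: "real^2" and \<epsilon> :: real
  assumes "convex_quadrilateral A B C D"
    and "0 < \<epsilon>" and "\<epsilon> < pi / 12"
    and "\<forall>\<alpha> \<in> {angle3 B A C, angle3 B C A, angle3 D A C, angle3 D C A}. \<bar>\<alpha> - pi / 4\<bar> < \<epsilon>"
  shows "\<forall>\<beta> \<in> {angle3 A B D, angle3 A D B, angle3 C B D, angle3 C D B}. \<bar>\<beta> - pi / 4\<bar> < 3 * \<epsilon>"
proof -
  have e0: "0 < \<epsilon>" and e1: "\<epsilon> < pi/12" using assms by auto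
  have h1: "\<bar>angle3 B A C - pi/4\<bar> < \<epsilon>" and h2: "\<bar>angle3 B C A - pi/4\<bar> < \<epsilon>"
    and h3: "\<bar>angle3 D A C - pi/4\<bar> < \<epsilon>" and h4: "\<bar>angle3 D C A - pi/4\<bar> < \<epsilon>"
    using assms(4) by auto
  from assms(1) have nABC: "\<not> collinear {A,B,C}" and nACD: "\<not> collinear {A,C,D}"
    and inter: "open_segment A C \<inter> open_segment B D \<noteq> {}"
    unfolding convex_quadrilateral_def by auto
  obtain P where PAC: "P \<in> open_segment A C" and PBD: "P \<in> open_segment B D" using inter by blast
  obtain t where t: "P = (1-t) *\<^sub>R A + t *\<^sub>R C" using PAC by (auto simp: in_segment)
  obtain s where s0: "0 < s" and s1: "s < 1" and s: "P = (1-s) *\<^sub>R B + s *\<^sub>R D"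
    using PBD by (auto simp: in_segment)
  define p where "p = C$1 - A$1"
  define q where "q = C$2 - A$2"
  define cr where "cr Z = p*(Z$2-A$2) - q*(Z$1-A$1)" for Z :: "real^2"
  have crB: "cr B \<noteq> 0"
  proof
    assume "cr B = 0"
    then have "collinear {A,B,C}" by (intro cross0_collinear) (simp add: cr_def p_def q_def)
    with nABC show False by simp
  qed
  have crD: "cr D \<noteq> 0"
  proof
    assume "cr D = 0"
    then have "collinear {A,D,C}" by (intro cross0_collinear) (simp add: cr_def p_def q_def)
    with nACD show False by (simp add: insert_commute)
  qed
  have crP: "cr P = 0"
    unfolding cr_def p_def q_def t by (simp add: algebra_simps)
  have crP2: "cr P = (1-s) * cr B + s * cr D"
    unfolding cr_def s by (simp add: algebra_simps)
  define \<sigma> where "\<sigma> = sgn (cr B)"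
  have \<sigma>2: "\<sigma>^2 = 1" using crB by (simp add: \<sigma>_def sgn_real_def)
  define K where "K = p^2 + q^2"
  have Kpos: "K > 0"
  proof -
    have "p \<noteq> 0 \<or> q \<noteq> 0" using crB by (auto simp: cr_def)
    then show ?thesis unfolding K_def by (simp add: sum_power2_gt_zero_iff)
  qed
  define X where "X w = w$1*p + w$2*q" for w :: "real^2"
  define Y where "Y w = \<sigma>*(p*w$2 - q*w$1)" for w :: "real^2"
  have VA: "vangle w1 w2 = arccos ((X w1 * X w2 + Y w1 * Y w2) / (sqrt ((X w1)^2 + (Y w1)^2) * sqrt ((X w2)^2 + (Y w2)^2)))" for w1 w2
    unfolding X_def Y_def using vangle_coords[OF Kpos[unfolded K_def] \<sigma>2] .
  define x where "x Z = X (Z - A)" for Z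
  define y where "y Z = Y (Z - A)" for Z
  have Xd: "X (Z - W) = x Z - x W" for Z W by (simp add: x_def X_def algebra_simps)
  have Yd: "Y (Z - W) = y Z - y W" for Z W by (simp add: y_def Y_def algebra_simps)
  have xA: "x A = 0" and yA: "y A = 0" by (simp_all add: x_def y_def X_def Y_def)
  have xC: "x C = K" by (simp add: x_def X_def K_def p_def q_def power2_eq_square)
  have yC: "y C = 0" by (simp add: y_def Y_def p_def q_def algebra_simps)
  have yBc: "y B = \<sigma> * cr B" by (simp add: y_def Y_def cr_def)
  have yDc: "y D = \<sigma> * cr D" by (simp add: y_def Y_def cr_def)
  have yB: "y B > 0" unfolding yBc \<sigma>_def using crB by (simp add: sgn_real_def)
  have "0 = (1-s) * cr B + s * cr D" using crP crP2 by simp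
  then have "0 = \<sigma> * ((1-s) * cr B + s * cr D)" by simp
  also have "\<dots> = (1-s) * y B + s * y D" unfolding yBc yDc by (simp add: algebra_simps)
  finally have "0 = (1-s) * y B + s * y D" .
  moreover have "(1-s) * y B > 0" using yB s1 by simp
  ultimately have "s * y D < 0" by linarith
  then have yD: "y D < 0" using s0 by (simp add: mult_less_0_iff)
  have sqK: "sqrt (K^2 + 0^2) = K" using Kpos by simp
  have sqK2: "sqrt ((0 - K)^2 + 0^2) = K" using Kpos by simp
  have ya: "y B \<noteq> 0" "\<bar>y B\<bar> = y B" "\<bar>y D\<bar> = - y D" using yB yD by auto
  have a1: "angle3 B A C = pi/2 - arctan (x B / y B)"
  proof -
    have "angle3 B A C = arccos ((x B * K) / (sqrt ((x B)^2 + (y B)^2) * K))"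
      unfolding angle3_def VA Xd Yd xA yA xC yC using Kpos by simp
    also have "\<dots> = pi/2 - arctan (x B / y B)" using ang_axis[OF ya(1) Kpos] ya by simp
    finally show ?thesis .
  qed
  have a2: "angle3 B C A = pi/2 - arctan ((K - x B) / y B)"
  proof -
    have "angle3 B C A = arccos (((K - x B) * K) / (sqrt ((K - x B)^2 + (y B)^2) * K))"
      unfolding angle3_def VA Xd Yd xA yA xC yC using Kpos by (simp add: power2_commute algebra_simps)
    also have "\<dots> = pi/2 - arctan ((K - x B) / y B)" using ang_axis[OF ya(1) Kpos] ya by simp
    finally show ?thesis .
  qed
  have yDn: "y D \<noteq> 0" using yD by simp
  have a3: "angle3 D A C = pi/2 - arctan (x D / (- y D))"
  proof -
    have "angle3 D A C = arccos ((x D * K) / (sqrt ((x D)^2 + (y D)^2) * K))"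
      unfolding angle3_def VA Xd Yd xA yA xC yC using Kpos by simp
    also have "\<dots> = pi/2 - arctan (x D / (- y D))" using ang_axis[OF yDn Kpos] ya by simp
    finally show ?thesis .
  qed
  have a4: "angle3 D C A = pi/2 - arctan ((K - x D) / (- y D))"
  proof -
    have "angle3 D C A = arccos (((K - x D) * K) / (sqrt ((K - x D)^2 + (y D)^2) * K))"
      unfolding angle3_def VA Xd Yd xA yA xC yC using Kpos by (simp add: power2_commute algebra_simps)
    also have "\<dots> = pi/2 - arctan ((K - x D) / (- y D))" using ang_axis[OF yDn Kpos] ya by simp
    finally show ?thesis .
  qed
  define c1 where "c1 = x B / y B"
  define c2 where "c2 = (K - x B) / y B"
  define c3 where "c3 = x D / (- y D)"
  define c4 where "c4 = (K - x D) / (- y D)"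
  define g where "g = (x B - x D) / (y B - y D)"
  define L where "L = tan (pi/4 - \<epsilon>)"
  define U where "U = tan (pi/4 + \<epsilon>)"
  define \<tau> where "\<tau> = tan (2*\<epsilon>)"
  have pi3: "pi > 3" using pi_gt3 .
  have ac1: "\<bar>arctan c1 - pi/4\<bar> < \<epsilon>" using h1 unfolding a1 c1_def by simp
  have ac2: "\<bar>arctan c2 - pi/4\<bar> < \<epsilon>" using h2 unfolding a2 c2_def by simp
  have ac3: "\<bar>arctan c3 - pi/4\<bar> < \<epsilon>" using h3 unfolding a3 c3_def by simp
  have ac4: "\<bar>arctan c4 - pi/4\<bar> < \<epsilon>" using h4 unfolding a4 c4_def by simp
  have ep4: "\<epsilon> < pi/4" using e1 e0 by linarith
  have w1: "L < c1 \<and> c1 < U" using arctan_window[OF ac1 e0 ep4] by (simp add: L_def U_def)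
  have w2: "L < c2 \<and> c2 < U" using arctan_window[OF ac2 e0 ep4] by (simp add: L_def U_def)
  have w3: "L < c3 \<and> c3 < U" using arctan_window[OF ac3 e0 ep4] by (simp add: L_def U_def)
  have w4: "L < c4 \<and> c4 < U" using arctan_window[OF ac4 e0 ep4] by (simp add: L_def U_def)
  have UL: "U - L = 2 * \<tau>" unfolding U_def L_def \<tau>_def using tan_ident[OF e0 e1] .
  have d12: "\<bar>c1 - c2\<bar> < 2*\<tau>" using w1 w2 UL by linarith
  have d34: "\<bar>c3 - c4\<bar> < 2*\<tau>" using w3 w4 UL by linarith
  have r1: "(c1 - c2) * y B = 2 * x B - K" using yB by (simp add: c1_def c2_def field_simps)
  have r2: "(c3 - c4) * (- y D) = 2 * x D - K" using yD by (simp add: c3_def c4_def field_simps)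
  have m1: "\<bar>(c1 - c2) * y B\<bar> < 2*\<tau> * y B"
    unfolding abs_mult using d12 yB ya by (simp add: mult_strict_right_mono)
  have m2: "\<bar>(c3 - c4) * (- y D)\<bar> < 2*\<tau> * (- y D)"
    unfolding abs_mult using d34 yD ya by (simp add: mult_strict_right_mono)
  have xx: "\<bar>x B - x D\<bar> < \<tau> * (y B - y D)"
  proof -
    have q1: "\<bar>2 * x B - K\<bar> < 2 * (\<tau> * y B)" using m1 r1 by simp
    have q2: "\<bar>2 * x D - K\<bar> < - 2 * (\<tau> * y D)" using m2 r2 by simp
    have q3: "\<tau> * (y B - y D) = \<tau> * y B - \<tau> * y D" by (simp add: algebra_simps)
    show ?thesis unfolding q3 using q1 q2 unfolding abs_less_iff by linarith
  qed
  have gb: "\<bar>g\<bar> < \<tau>"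
    unfolding g_def abs_divide using xx yB yD by (simp add: divide_less_eq)
  have e2: "2*\<epsilon> < pi/2" using e1 pi3 by linarith
  have ag: "\<bar>arctan g\<bar> < 2*\<epsilon>" using arctan_small[OF gb[unfolded \<tau>_def]] e0 e2 by simp
  have yBD: "y B - y D > 0" using yB yD by simp
  have b1: "angle3 A B D = \<bar>arctan c1 - arctan g\<bar>"
  proof -
    have "angle3 A B D = arccos (((x A - x B) * (x D - x B) + (y A - y B) * (y D - y B)) /
        (sqrt ((x A - x B)^2 + (y A - y B)^2) * sqrt ((x D - x B)^2 + (y D - y B)^2)))"
      unfolding angle3_def VA Xd Yd ..
    also have "\<dots> = \<bar>arctan ((x A - x B) / (y A - y B)) - arctan ((x D - x B) / (y D - y B))\<bar>"
      using yB yD by (intro arccos_arctan) (simp add: yA mult_pos_pos mult_pos_neg mult_neg_pos)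
    also have "(x A - x B) / (y A - y B) = c1" by (simp add: xA yA c1_def)
    also have "(x D - x B) / (y D - y B) = g" unfolding g_def using minus_divide_divide[of "x B - x D" "y B - y D"] by simp
    finally show ?thesis .
  qed
  have b2: "angle3 C B D = \<bar>arctan c2 + arctan g\<bar>"
  proof -
    have "angle3 C B D = arccos (((x C - x B) * (x D - x B) + (y C - y B) * (y D - y B)) /
        (sqrt ((x C - x B)^2 + (y C - y B)^2) * sqrt ((x D - x B)^2 + (y D - y B)^2)))"
      unfolding angle3_def VA Xd Yd ..
    also have "\<dots> = \<bar>arctan ((x C - x B) / (y C - y B)) - arctan ((x D - x B) / (y D - y B))\<bar>"
      using yB yD by (intro arccos_arctan) (simp add: yC mult_pos_pos mult_pos_neg mult_neg_pos)
    also have "(x C - x B) / (y C - y B) = - c2" by (simp add: xC yC c2_def)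
    also have "(x D - x B) / (y D - y B) = g" unfolding g_def using minus_divide_divide[of "x B - x D" "y B - y D"] by simp
    finally show ?thesis by (simp add: arctan_minus abs_minus_commute)
  qed
  have b3: "angle3 A D B = \<bar>arctan c3 + arctan g\<bar>"
  proof -
    have "angle3 A D B = arccos (((x A - x D) * (x B - x D) + (y A - y D) * (y B - y D)) /
        (sqrt ((x A - x D)^2 + (y A - y D)^2) * sqrt ((x B - x D)^2 + (y B - y D)^2)))"
      unfolding angle3_def VA Xd Yd ..
    also have "\<dots> = \<bar>arctan ((x A - x D) / (y A - y D)) - arctan ((x B - x D) / (y B - y D))\<bar>"
      using yB yD by (intro arccos_arctan) (simp add: yA mult_pos_pos mult_pos_neg mult_neg_pos)
    also have "(x A - x D) / (y A - y D) = - c3" by (simp add: xA yA c3_def)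
    also have "(x B - x D) / (y B - y D) = g" by (simp add: g_def)
    finally show ?thesis by (simp add: arctan_minus abs_minus_commute)
  qed
  have b4: "angle3 C D B = \<bar>arctan c4 - arctan g\<bar>"
  proof -
    have "angle3 C D B = arccos (((x C - x D) * (x B - x D) + (y C - y D) * (y B - y D)) /
        (sqrt ((x C - x D)^2 + (y C - y D)^2) * sqrt ((x B - x D)^2 + (y B - y D)^2)))"
      unfolding angle3_def VA Xd Yd ..
    also have "\<dots> = \<bar>arctan ((x C - x D) / (y C - y D)) - arctan ((x B - x D) / (y B - y D))\<bar>"
      using yB yD by (intro arccos_arctan) (simp add: yC mult_pos_pos mult_pos_neg mult_neg_pos)
    also have "(x C - x D) / (y C - y D) = c4" by (simp add: xC yC c4_def)
    also have "(x B - x D) / (y B - y D) = g" by (simp add: g_def)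
    finally show ?thesis .
  qed
  have e3: "3*\<epsilon> < pi/4" using e1 pi3 by linarith
  have f1: "\<bar>angle3 A B D - pi/4\<bar> < 3*\<epsilon>"
  proof -
    have l1: "arctan c1 - pi/4 < \<epsilon>" "- (arctan c1 - pi/4) < \<epsilon>" using ac1 unfolding abs_less_iff by auto
    have l2: "arctan g < 2*\<epsilon>" "- arctan g < 2*\<epsilon>" using ag unfolding abs_less_iff by auto
    have pos: "arctan c1 - arctan g > 0" using l1 l2 e3 by linarith
    show ?thesis unfolding b1 abs_of_pos[OF pos] abs_less_iff using l1 l2 by linarith
  qed
  have f2: "\<bar>angle3 C B D - pi/4\<bar> < 3*\<epsilon>"
  proof -
    have l1: "arctan c2 - pi/4 < \<epsilon>" "- (arctan c2 - pi/4) < \<epsilon>" using ac2 unfolding abs_less_iff by auto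
    have l2: "arctan g < 2*\<epsilon>" "- arctan g < 2*\<epsilon>" using ag unfolding abs_less_iff by auto
    have pos: "arctan c2 + arctan g > 0" using l1 l2 e3 by linarith
    show ?thesis unfolding b2 abs_of_pos[OF pos] abs_less_iff using l1 l2 by linarith
  qed
  have f3: "\<bar>angle3 A D B - pi/4\<bar> < 3*\<epsilon>"
  proof -
    have l1: "arctan c3 - pi/4 < \<epsilon>" "- (arctan c3 - pi/4) < \<epsilon>" using ac3 unfolding abs_less_iff by auto
    have l2: "arctan g < 2*\<epsilon>" "- arctan g < 2*\<epsilon>" using ag unfolding abs_less_iff by auto
    have pos: "arctan c3 + arctan g > 0" using l1 l2 e3 by linarith
    show ?thesis unfolding b3 abs_of_pos[OF pos] abs_less_iff using l1 l2 by linarith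
  qed
  have f4: "\<bar>angle3 C D B - pi/4\<bar> < 3*\<epsilon>"
  proof -
    have l1: "arctan c4 - pi/4 < \<epsilon>" "- (arctan c4 - pi/4) < \<epsilon>" using ac4 unfolding abs_less_iff by auto
    have l2: "arctan g < 2*\<epsilon>" "- arctan g < 2*\<epsilon>" using ag unfolding abs_less_iff by auto
    have pos: "arctan c4 - arctan g > 0" using l1 l2 e3 by linarith
    show ?thesis unfolding b4 abs_of_pos[OF pos] abs_less_iff using l1 l2 by linarith
  qed
  show ?thesis using f1 f2 f3 f4 by auto
qed

end
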